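(* Let $n\ge3$, let $S_n$ act on $V=\mathbb{C}^n$ by permutations, fix $a,b\in\mathbb{C}$, let $x$ be a $5$-cycle and $y$ a $3$-cycle, and let $\phi_{x,y}$ be the corresponding summand of the $(xy)$-component of $\phi(\kappa^C_{\mathrm{penta}},\kappa^L_{\mathrm{tri}})$. For basis vectors $e_i,e_j,e_k$: (1) if $e_i,e_j\in V^y$, then $\phi_{x,y}(e_i,e_j,e_k)=0$; (2) if $e_i\in V^y\cap V^x$, then $\phi_{x,y}(e_i,e_j,e_k)=0$; (3) if $e_i\in V^y\setminus V^x$ and $e_j\notin V^y$, then $\phi_{x,y}(e_i,e_j,ye_j)=2(a-b)^3\big[\delta_y(xe_i)-2\delta_y(x^2e_i)+2\delta_y(x^{-2}e_i)-\delta_y(x^{-1}e_i)\big]$; (4) if $e_i\notin V^y$, then $\phi_{x,y}(e_i,ye_i,y^2e_i)=0$.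
   Context: $S_n$ acts by $\sigma e_i=e_{\sigma(i)}$; $V^g$ is the fixed space of $g$; $\delta_y(v)=1$ if $v\in V^y$ and $0$ otherwise. $\kappa^L_{\mathrm{tri}}$ is the linear 2-cochain supported on 3-cycles with $\kappa^L_{(ijk)}(e_i,e_j)=\kappa^L_{(ijk)}(e_j,e_k)=\kappa^L_{(ijk)}(e_k,e_i)=a(e_i+e_j+e_k)+b\sum_{l\notin\{i,j,k\}}e_l$ and $\kappa^L_{(ijk)}(e_l,e_m)=0$ whenever $e_l$ or $e_m$ lies in $V^{(ijk)}$. $\kappa^C_{\mathrm{penta}}$ is the constant 2-cochain with $\kappa^C_g=0$ unless $g$ is a 5-cycle, and for a 5-cycle $g$, $\kappa^C_g(e_i,e_j)=(a-b)^2([g]_{ij}-[g]_{ji}-2[g^2]_{ij}+2[g^2]_{ji})$, where $[h]_{ij}=1$ if $i=h(j)$ and $0$ otherwise. For $\alpha$ constant and $\beta$ linear, $\phi(\alpha,\beta)_g=\sum_{xy=g}\phi_{x,y}$ with $\phi_{x,y}(v_1,v_2,v_3)=\alpha_x(v_1+yv_1,\beta_y(v_2,v_3))+\alpha_x(v_2+yv_2,\beta_y(v_3,v_1))+\alpha_x(v_3+yv_3,\beta_y(v_1,v_2))$; here $\alpha=\kappa^C_{\mathrm{penta}}$, $\beta=\kappa^L_{\mathrm{tri}}$. *)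

theory Defs
  imports Complex_Main "HOL-Combinatorics.Cycles"
begin

text \<open>V = C^n, vectors are functions nat => complex, coordinates indexed by {..<n}
  (entries outside {..<n} are zero for genuine elements of V).\<close>

definition ev :: "nat \<Rightarrow> nat \<Rightarrow> complex" where
  "ev i = (\<lambda>l. if l = i then 1 else 0)"

text \<open>Permutation action: act s (ev i) = ev (s i).\<close>
definition act :: "(nat \<Rightarrow> nat) \<Rightarrow> (nat \<Rightarrow> complex) \<Rightarrow> (nat \<Rightarrow> complex)" where
  "act s v = (\<lambda>l. v (inv s l))"

definition vadd :: "(nat \<Rightarrow> complex) \<Rightarrow> (nat \<Rightarrow> complex) \<Rightarrow> (nat \<Rightarrow> complex)" where
  "vadd u v = (\<lambda>l. u l + v l)"

definition fixsp :: "nat \<Rightarrow> (nat \<Rightarrow> nat) \<Rightarrow> (nat \<Rightarrow> complex) set" where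
  "fixsp n g = {v. (\<forall>l\<ge>n. v l = 0) \<and> act g v = v}"

definition delta :: "nat \<Rightarrow> (nat \<Rightarrow> nat) \<Rightarrow> (nat \<Rightarrow> complex) \<Rightarrow> complex" where
  "delta n y v = (if v \<in> fixsp n y then 1 else 0)"

definition is_kcycle :: "nat \<Rightarrow> nat \<Rightarrow> (nat \<Rightarrow> nat) \<Rightarrow> bool" where
  "is_kcycle k n g = (\<exists>cs. cycle cs \<and> length cs = k \<and> set cs \<subseteq> {..<n} \<and> g = cycle_of_list cs)"

text \<open>kappa^L_tri on basis vectors for a 3-cycle g = (i j k) (i -> j -> k -> i):
  value w_g = a(e_i+e_j+e_k) + b(sum of the other e_l) on the pairs (e_i,e_j),(e_j,e_k),(e_k,e_i),
  extended as an alternating form (so -w_g on the reversed pairs) and zero if an argument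
  is fixed by g.\<close>
definition wL :: "nat \<Rightarrow> complex \<Rightarrow> complex \<Rightarrow> (nat \<Rightarrow> nat) \<Rightarrow> nat \<Rightarrow> complex" where
  "wL n a b g = (\<lambda>t. if t < n then (if g t \<noteq> t then a else b) else 0)"

definition kLbasis :: "(nat \<Rightarrow> nat) \<Rightarrow> nat \<Rightarrow> nat \<Rightarrow> complex" where
  "kLbasis g l m =
     (if g l \<noteq> l \<and> g m \<noteq> m then
        (if m = g l then 1 else if l = g m then -1 else 0)
      else 0)"

definition kappaL_tri :: "nat \<Rightarrow> complex \<Rightarrow> complex \<Rightarrow> (nat \<Rightarrow> nat)
    \<Rightarrow> (nat \<Rightarrow> complex) \<Rightarrow> (nat \<Rightarrow> complex) \<Rightarrow> (nat \<Rightarrow> complex)" where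
  "kappaL_tri n a b g v1 v2 =
     (if is_kcycle 3 n g then
        (\<lambda>t. (\<Sum>l<n. \<Sum>m<n. v1 l * v2 m * kLbasis g l m) * wL n a b g t)
      else (\<lambda>t. 0))"

definition pm :: "(nat \<Rightarrow> nat) \<Rightarrow> nat \<Rightarrow> nat \<Rightarrow> complex" where
  "pm h i j = (if i = h j then 1 else 0)"

definition kappaC_penta :: "nat \<Rightarrow> complex \<Rightarrow> complex \<Rightarrow> (nat \<Rightarrow> nat)
    \<Rightarrow> (nat \<Rightarrow> complex) \<Rightarrow> (nat \<Rightarrow> complex) \<Rightarrow> complex" where
  "kappaC_penta n a b g v1 v2 =
     (if is_kcycle 5 n g then
        (\<Sum>i<n. \<Sum>j<n. v1 i * v2 j *
           ((a - b)^2 * (pm g i j - pm g j i - 2 * pm (g \<circ> g) i j + 2 * pm (g \<circ> g) j i)))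
      else 0)"

definition phi_xy :: "nat \<Rightarrow> complex \<Rightarrow> complex \<Rightarrow> (nat \<Rightarrow> nat) \<Rightarrow> (nat \<Rightarrow> nat)
    \<Rightarrow> (nat \<Rightarrow> complex) \<Rightarrow> (nat \<Rightarrow> complex) \<Rightarrow> (nat \<Rightarrow> complex) \<Rightarrow> complex" where
  "phi_xy n a b x y v1 v2 v3 =
       kappaC_penta n a b x (vadd v1 (act y v1)) (kappaL_tri n a b y v2 v3)
     + kappaC_penta n a b x (vadd v2 (act y v2)) (kappaL_tri n a b y v3 v1)
     + kappaC_penta n a b x (vadd v3 (act y v3)) (kappaL_tri n a b y v1 v2)"

end

theory Submission imports Defs begin

lemma act_ev: assumes "bij s" shows "act s (ev i) = ev (s i)"
proof -
  have "inv s l = i \<longleftrightarrow> l = s i" for l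
    using assms by (metis bij_inv_eq_iff)
  then show ?thesis unfolding act_def ev_def by (auto simp: fun_eq_iff)
qed

lemma perm_lt: "g permutes {..<n} \<Longrightarrow> p < n \<Longrightarrow> g p < n"
  using permutes_in_image[of g "{..<n}" p] by simp

lemma perm_inv_lt: "g permutes {..<n} \<Longrightarrow> p < n \<Longrightarrow> inv g p < n"
  using perm_lt permutes_inv by blast

lemma ev_sum: "p < n \<Longrightarrow> (\<Sum>i<n. ev p i * h i) = h p"
proof -
  have "(\<Sum>i<n. ev p i * h i) = (\<Sum>i<n. if i = p then h i else 0)"
    by (intro sum.cong) (auto simp: ev_def)
  then show "p < n \<Longrightarrow> ?thesis" by simp
qed

lemma ev_inj: "ev i = ev j \<longleftrightarrow> i = j"
  unfolding ev_def by (metis one_neq_zero)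

lemma fix_ev: "bij y \<Longrightarrow> ev t \<in> fixsp n y \<longleftrightarrow> t < n \<and> y t = t"
  unfolding fixsp_def by (auto simp: act_ev ev_inj) (auto simp: ev_def split: if_splits)

definition Dl :: "(nat \<Rightarrow> nat) \<Rightarrow> nat \<Rightarrow> complex" where
  "Dl y t = (if y t = t then 1 else 0)"

lemma delta_ev: "bij y \<Longrightarrow> t < n \<Longrightarrow> delta n y (ev t) = Dl y t"
  unfolding delta_def Dl_def by (simp add: fix_ev)

lemma wL_eq: "t < n \<Longrightarrow> wL n a b y t = a - (a - b) * Dl y t"
  unfolding wL_def Dl_def by auto

definition H :: "nat \<Rightarrow> complex \<Rightarrow> complex \<Rightarrow> (nat \<Rightarrow> nat) \<Rightarrow> (nat \<Rightarrow> complex) \<Rightarrow> nat \<Rightarrow> complex" where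
  "H n a b x w p = (\<Sum>j<n. w j * ((a - b)^2 * (pm x p j - pm x j p - 2 * pm (x \<circ> x) p j + 2 * pm (x \<circ> x) j p)))"

lemma kC_gen: "is_kcycle 5 n x \<Longrightarrow> kappaC_penta n a b x u w = (\<Sum>i<n. u i * H n a b x w i)"
  unfolding kappaC_penta_def H_def by (simp add: sum_distrib_left mult.assoc)

lemma kC_two: assumes "is_kcycle 5 n x" "p < n" "q < n"
  shows "kappaC_penta n a b x (vadd (ev p) (ev q)) w = H n a b x w p + H n a b x w q"
  using assms by (simp add: kC_gen vadd_def ring_distribs sum.distrib ev_sum)

lemma pm_sum1: assumes "g permutes {..<n}" "p < n"
  shows "(\<Sum>j<n. w j * pm g p j) = w (inv g p)"
proof -
  have "(\<Sum>j<n. w j * pm g p j) = (\<Sum>j<n. if j = inv g p then w j else 0)"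
  proof (intro sum.cong refl)
    fix j
    have "p = g j \<longleftrightarrow> j = inv g p"
      using permutes_inverses[OF assms(1)] by metis
    then show "w j * pm g p j = (if j = inv g p then w j else 0)" by (auto simp: pm_def)
  qed
  also have "\<dots> = w (inv g p)" using assms
    by (simp add: perm_inv_lt)
  finally show ?thesis .
qed

lemma pm_sum2: assumes "g permutes {..<n}" "p < n"
  shows "(\<Sum>j<n. w j * pm g j p) = w (g p)"
proof -
  have "(\<Sum>j<n. w j * pm g j p) = (\<Sum>j<n. if j = g p then w j else 0)"
    by (intro sum.cong) (auto simp: pm_def)
  also have "\<dots> = w (g p)" using assms
    by (simp add: perm_lt)
  finally show ?thesis .
qed

definition F where
  "F a b x y p = (a - b)^3 * (Dl y (x p) - Dl y (inv x p) + 2 * Dl y (inv x (inv x p)) - 2 * Dl y (x (x p)))"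

lemma H_eq: assumes "x permutes {..<n}" "p < n"
  shows "H n a b x (\<lambda>t. s * wL n a b y t) p = s * F a b x y p"
proof -
  have xx: "(x \<circ> x) permutes {..<n}" using assms by (simp add: permutes_compose)
  have ix: "inv (x \<circ> x) = inv x \<circ> inv x"
    using assms by (simp add: o_inv_distrib permutes_bij)
  have lt: "x p < n" "inv x p < n" "x (x p) < n" "inv x (inv x p) < n"
    using assms by (auto simp: perm_lt perm_inv_lt)
  have "H n a b x (\<lambda>t. s * wL n a b y t) p =
     (a - b)^2 * ((\<Sum>j<n. s * wL n a b y j * pm x p j) - (\<Sum>j<n. s * wL n a b y j * pm x j p)
       - 2 * (\<Sum>j<n. s * wL n a b y j * pm (x \<circ> x) p j) + 2 * (\<Sum>j<n. s * wL n a b y j * pm (x \<circ> x) j p))"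
    unfolding H_def by (simp add: algebra_simps sum.distrib sum_subtractf sum_distrib_left)
  also have "\<dots> = (a - b)^2 * (s * wL n a b y (inv x p) - s * wL n a b y (x p)
       - 2 * (s * wL n a b y (inv x (inv x p))) + 2 * (s * wL n a b y (x (x p))))"
    using pm_sum1[OF assms(1,2)] pm_sum2[OF assms(1,2)] pm_sum1[OF xx assms(2)] pm_sum2[OF xx assms(2)]
    by (simp add: ix)
  also have "\<dots> = s * F a b x y p"
    unfolding F_def using lt by (simp add: wL_eq power3_eq_cube power2_eq_square algebra_simps)
  finally show ?thesis .
qed

lemma kL_ev: assumes "is_kcycle 3 n y" "j < n" "k < n"
  shows "kappaL_tri n a b y (ev j) (ev k) = (\<lambda>t. kLbasis y j k * wL n a b y t)"
proof -
  have "(\<Sum>l<n. \<Sum>m<n. ev j l * ev k m * kLbasis y l m) = (\<Sum>l<n. ev j l * (\<Sum>m<n. ev k m * kLbasis y l m))"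
    by (simp add: sum_distrib_left mult.assoc)
  also have "\<dots> = (\<Sum>l<n. ev j l * kLbasis y l k)" using assms by (simp add: ev_sum)
  also have "\<dots> = kLbasis y j k" using assms by (simp add: ev_sum)
  finally show ?thesis using assms(1) unfolding kappaL_tri_def by simp
qed

lemma phi_formula:
  assumes x5: "is_kcycle 5 n x" and y3: "is_kcycle 3 n y"
    and xp: "x permutes {..<n}" and yp: "y permutes {..<n}"
    and lt: "i < n" "j < n" "k < n"
  shows "phi_xy n a b x y (ev i) (ev j) (ev k) =
    kLbasis y j k * (F a b x y i + F a b x y (y i))
  + kLbasis y k i * (F a b x y j + F a b x y (y j))
  + kLbasis y i j * (F a b x y k + F a b x y (y k))"
proof -
  have yb: "bij y" using yp by (rule permutes_bij)
  have ylt: "y i < n" "y j < n" "y k < n" using yp lt by (auto simp: perm_lt)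
  show ?thesis
    unfolding phi_xy_def using lt ylt
    by (simp add: act_ev[OF yb] kL_ev[OF y3] kC_two[OF x5] H_eq[OF xp] ring_distribs)
qed

lemma count_eq: assumes "bij g" "finite M"
  shows "(\<Sum>t\<in>M. if g t \<in> M then 1 else 0::complex) = (\<Sum>t\<in>M. if inv g t \<in> M then 1 else 0)"
proof -
  have bb: "bij_betw g {t\<in>M. g t \<in> M} {s\<in>M. inv g s \<in> M}"
    unfolding bij_betw_def
  proof
    show "inj_on g {t \<in> M. g t \<in> M}" by (rule inj_on_subset[OF bij_is_inj[OF assms(1)]]) simp
    show "g ` {t \<in> M. g t \<in> M} = {s \<in> M. inv g s \<in> M}"
    proof
      show "g ` {t \<in> M. g t \<in> M} \<subseteq> {s \<in> M. inv g s \<in> M}"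
        using assms(1) by (auto simp: bij_is_inj)
      show "{s \<in> M. inv g s \<in> M} \<subseteq> g ` {t \<in> M. g t \<in> M}"
      proof
        fix s assume "s \<in> {s \<in> M. inv g s \<in> M}"
        moreover have "g (inv g s) = s" using assms(1) by (meson bij_inv_eq_iff)
        ultimately show "s \<in> g ` {t \<in> M. g t \<in> M}" by (metis (mono_tags, lifting) image_eqI mem_Collect_eq)
      qed
    qed
  qed
  have "(\<Sum>t\<in>M. if g t \<in> M then 1 else 0::complex) = of_nat (card {t\<in>M. g t \<in> M})"
    using assms(2) sum.inter_filter[OF assms(2), of "\<lambda>_. 1::complex" "\<lambda>t. g t \<in> M"] by simp
  also have "\<dots> = of_nat (card {s\<in>M. inv g s \<in> M})" using bij_betw_same_card[OF bb] by simp
  also have "\<dots> = (\<Sum>t\<in>M. if inv g t \<in> M then 1 else 0)"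
    using sum.inter_filter[OF assms(2), of "\<lambda>_. 1::complex" "\<lambda>t. inv g t \<in> M"] by simp
  finally show ?thesis .
qed

lemma Dl_count: assumes "bij g" "finite M" "\<And>u. Dl y u = (if u \<in> M then 0 else 1)"
  shows "(\<Sum>t\<in>M. Dl y (g t)) = (\<Sum>t\<in>M. Dl y (inv g t))"
proof -
  have e: "Dl y u = 1 - (if u \<in> M then 1 else 0)" for u using assms(3) by simp
  show ?thesis unfolding e sum_subtractf using count_eq[OF assms(1,2)] by simp
qed

lemma sumF: assumes "bij x" "finite M" "\<And>u. Dl y u = (if u \<in> M then 0 else 1)"
  shows "(\<Sum>t\<in>M. F a b x y t) = 0"
proof -
  have bxx: "bij (x \<circ> x)" using assms(1) by (simp add: bij_comp)
  have ix: "inv (x \<circ> x) = inv x \<circ> inv x" using assms(1) by (simp add: o_inv_distrib)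
  have c1: "(\<Sum>t\<in>M. Dl y (x t)) = (\<Sum>t\<in>M. Dl y (inv x t))" by (rule Dl_count[OF assms])
  have c2: "(\<Sum>t\<in>M. Dl y (x (x t))) = (\<Sum>t\<in>M. Dl y (inv x (inv x t)))"
    using Dl_count[OF bxx assms(2,3)] by (simp add: ix)
  have "(\<Sum>t\<in>M. F a b x y t) = (a - b)^3 * ((\<Sum>t\<in>M. Dl y (x t)) - (\<Sum>t\<in>M. Dl y (inv x t))
      + 2 * (\<Sum>t\<in>M. Dl y (inv x (inv x t))) - 2 * (\<Sum>t\<in>M. Dl y (x (x t))))"
    unfolding F_def by (simp add: sum_distrib_left sum_distrib_right sum.distrib sum_subtractf algebra_simps)
  also have "\<dots> = 0" using c1 c2 by simp
  finally show ?thesis .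
qed

theorem lemma7p6:
  fixes n :: nat and a b :: complex and x y :: "nat \<Rightarrow> nat"
  assumes "n \<ge> 3"
    and "is_kcycle 5 n x"
    and "is_kcycle 3 n y"
  shows
    "(\<forall>i<n. \<forall>j<n. \<forall>k<n.
        ev i \<in> fixsp n y \<and> ev j \<in> fixsp n y \<longrightarrow>
        phi_xy n a b x y (ev i) (ev j) (ev k) = 0)
   \<and> (\<forall>i<n. \<forall>j<n. \<forall>k<n.
        ev i \<in> fixsp n y \<inter> fixsp n x \<longrightarrow>
        phi_xy n a b x y (ev i) (ev j) (ev k) = 0)
   \<and> (\<forall>i<n. \<forall>j<n.
        ev i \<in> fixsp n y - fixsp n x \<and> ev j \<notin> fixsp n y \<longrightarrow>
        phi_xy n a b x y (ev i) (ev j) (act y (ev j)) =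
          2 * (a - b)^3 * (delta n y (act x (ev i)) - 2 * delta n y (act (x \<circ> x) (ev i))
                          + 2 * delta n y (act (inv x \<circ> inv x) (ev i)) - delta n y (act (inv x) (ev i))))
   \<and> (\<forall>i<n.
        ev i \<notin> fixsp n y \<longrightarrow>
        phi_xy n a b x y (ev i) (act y (ev i)) (act (y \<circ> y) (ev i)) = 0)"
proof -
  obtain cs where cs: "cycle cs" "length cs = 3" "set cs \<subseteq> {..<n}" "y = cycle_of_list cs"
    using assms(3) unfolding is_kcycle_def by blast
  obtain p q r where pqr: "cs = [p, q, r]"
    using cs(2) by (metis (no_types) length_0_conv length_Suc_conv numeral_3_eq_3)
  have dist: "p \<noteq> q" "q \<noteq> r" "p \<noteq> r" using cs(1) pqr by auto
  have yf: "y t = (if t = p then q else if t = q then r else if t = r then p else t)" for t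
    using cs(4) pqr dist by (auto simp: transpose_def)
  have yp: "y permutes {..<n}" using cs cycle_permutes permutes_subset by metis
  have yb: "bij y" using yp by (rule permutes_bij)
  obtain ds where ds: "cycle ds" "length ds = 5" "set ds \<subseteq> {..<n}" "x = cycle_of_list ds"
    using assms(2) unfolding is_kcycle_def by blast
  have xp: "x permutes {..<n}" using ds cycle_permutes permutes_subset by metis
  have xb: "bij x" using xp by (rule permutes_bij)
  have Dly: "Dl y u = (if u \<in> {p,q,r} then 0 else 1)" for u
    unfolding Dl_def using yf dist by auto
  have sF: "F a b x y p + F a b x y q + F a b x y r = 0"
    using sumF[OF xb _ Dly, of a b] dist by (simp add: add.assoc)
  have fixe: "ev t \<in> fixsp n y \<longleftrightarrow> t < n \<and> y t = t" for t by (rule fix_ev[OF yb])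
  have PF: "\<And>i j k. i < n \<Longrightarrow> j < n \<Longrightarrow> k < n \<Longrightarrow> phi_xy n a b x y (ev i) (ev j) (ev k) =
    kLbasis y j k * (F a b x y i + F a b x y (y i))
  + kLbasis y k i * (F a b x y j + F a b x y (y j))
  + kLbasis y i j * (F a b x y k + F a b x y (y k))"
    by (rule phi_formula[OF assms(2,3) xp yp])
  have P1: "phi_xy n a b x y (ev i) (ev j) (ev k) = 0"
    if "i < n" "j < n" "k < n" "y i = i" "y j = j" for i j k
    using PF[OF that(1-3)] that by (simp add: kLbasis_def)
  have P2: "phi_xy n a b x y (ev i) (ev j) (ev k) = 0"
    if "i < n" "j < n" "k < n" "y i = i" "x i = i" for i j k
  proof -
    have "inv x i = i" using that(5) xb by (metis bij_inv_eq_iff)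
    then have "F a b x y i = 0" using that unfolding F_def by simp
    then show ?thesis using PF[OF that(1-3)] that by (simp add: kLbasis_def)
  qed
  have P3: "phi_xy n a b x y (ev i) (ev j) (act y (ev j)) =
          2 * (a - b)^3 * (delta n y (act x (ev i)) - 2 * delta n y (act (x \<circ> x) (ev i))
                          + 2 * delta n y (act (inv x \<circ> inv x) (ev i)) - delta n y (act (inv x) (ev i)))"
    if "i < n" "j < n" "y i = i" "y j \<noteq> j" for i j
  proof -
    have yjl: "y j < n" using yp that by (simp add: perm_lt)
    have yyj: "y (y j) \<noteq> y j" using yb that(4) by (metis bij_pointE)
    have "phi_xy n a b x y (ev i) (ev j) (act y (ev j)) = 2 * F a b x y i"
      using PF[OF that(1,2) yjl] that yyj by (simp add: act_ev[OF yb] kLbasis_def)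
    moreover have "bij (x \<circ> x)" "bij (inv x \<circ> inv x)" "bij (inv x)"
      using xb by (auto simp: bij_comp bij_imp_bij_inv)
    moreover have "x i < n" "x (x i) < n" "inv x i < n" "inv x (inv x i) < n"
      using xp that by (auto simp: perm_lt perm_inv_lt)
    ultimately show ?thesis
      by (simp add: act_ev xb delta_ev[OF yb] F_def algebra_simps)
  qed
  have P4: "phi_xy n a b x y (ev i) (act y (ev i)) (act (y \<circ> y) (ev i)) = 0"
    if "i < n" "y i \<noteq> i" for i
  proof -
    have ybb: "bij (y \<circ> y)" using yb by (simp add: bij_comp)
    have l: "y i < n" "y (y i) < n" using yp that by (auto simp: perm_lt)
    have "i = p \<or> i = q \<or> i = r" using that(2) yf by metis
    then have "phi_xy n a b x y (ev i) (ev (y i)) (ev (y (y i))) = 0"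
      using PF[OF that(1) l] sF dist by (auto simp: yf kLbasis_def algebra_simps)
    then show ?thesis by (simp add: act_ev[OF yb] act_ev[OF ybb])
  qed
  have fixx: "ev t \<in> fixsp n x \<longleftrightarrow> t < n \<and> x t = t" for t by (rule fix_ev[OF xb])
  show ?thesis
    using P1 P2 P3 P4 by (auto simp: fixe fixx)
qed

end
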